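(* Let $(X,S)$ be a faithful transformation semigroup such that $(X,S)$ divides $(S^\bullet,S)$. Then $\llbracket S\cup\overline X\rrbracket=\llbracket S^{\mathsf{bar}}\rrbracket$. In particular, if $S$ is any finite semigroup and $J$ is a right ideal of $S$ on which $S$ acts faithfully by right multiplication, then $\llbracket S^{\mathsf{bar}}\rrbracket=\llbracket S\cup\overline J\rrbracket$.
   Context: All semigroups and sets are finite. A transformation semigroup $(X,S)$ is a semigroup $S$ acting faithfully on the right of a set $X$; $\overline X$ denotes the set of constant maps on $X$, and $S\cup\overline X$ is the transformation semigroup on $X$ generated by (equal to) $S$ together with these constant maps. Division of transformation semigroups is in Eilenberg's sense: $(X,S)$ divides $(Y,T)$ if there is a surjective partial map $\varphi$ from $Y$ onto $X$ such that for every $s\in S$ there is $t\in T$ with $(y\varphi)s=(yt)\varphi$ for all $y$ in the domain of $\varphi$ (and $yt$ in the domain of $\varphi$). For a semigroup $S$, $S^\bullet=S$ if $S$ is a monoid and $S^\bullet=S^I$ (external identity adjoined) otherwise; $(S^\bullet,S)$ is the action by right multiplication, and $S^{\mathsf{bar}}$ is the transformation semigroup on $S^\bullet$ consisting of these right multiplications together with all constant maps on $S^\bullet$. $\llbracket S\rrbracket$ is the pseudovariety generated by $S$. *)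

theory Defs
  imports Main "HOL-Library.FuncSet"
begin

definition semigroup_on :: "'a set \<Rightarrow> ('a \<Rightarrow> 'a \<Rightarrow> 'a) \<Rightarrow> bool" where
  "semigroup_on A m \<longleftrightarrow> finite A \<and> A \<noteq> {} \<and>
     (\<forall>x\<in>A. \<forall>y\<in>A. m x y \<in> A) \<and>
     (\<forall>x\<in>A. \<forall>y\<in>A. \<forall>z\<in>A. m (m x y) z = m x (m y z))"

definition is_monoid_on :: "'a set \<Rightarrow> ('a \<Rightarrow> 'a \<Rightarrow> 'a) \<Rightarrow> bool" where
  "is_monoid_on A m \<longleftrightarrow> (\<exists>e\<in>A. \<forall>x\<in>A. m e x = x \<and> m x e = x)"

definition hom_on :: "'a set \<Rightarrow> ('a \<Rightarrow> 'a \<Rightarrow> 'a) \<Rightarrow> 'b set \<Rightarrow> ('b \<Rightarrow> 'b \<Rightarrow> 'b) \<Rightarrow> ('a \<Rightarrow> 'b) \<Rightarrow> bool" where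
  "hom_on A m B n h \<longleftrightarrow> (\<forall>x\<in>A. h x \<in> B) \<and> (\<forall>x\<in>A. \<forall>y\<in>A. h (m x y) = n (h x) (h y))"

definition sg_divides :: "'u set \<times> ('u \<Rightarrow> 'u \<Rightarrow> 'u) \<Rightarrow> 'v set \<times> ('v \<Rightarrow> 'v \<Rightarrow> 'v) \<Rightarrow> bool" where
  "sg_divides U V \<longleftrightarrow> (\<exists>W h. W \<subseteq> fst V \<and> W \<noteq> {} \<and> (\<forall>x\<in>W. \<forall>y\<in>W. snd V x y \<in> W) \<and>
       hom_on W (snd V) (fst U) (snd U) h \<and> h ` W = fst U)"

definition sg_power :: "nat \<Rightarrow> 'v set \<times> ('v \<Rightarrow> 'v \<Rightarrow> 'v) \<Rightarrow> (nat \<Rightarrow> 'v) set \<times> ((nat \<Rightarrow> 'v) \<Rightarrow> (nat \<Rightarrow> 'v) \<Rightarrow> (nat \<Rightarrow> 'v))" where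
  "sg_power n V = (PiE {..<n} (\<lambda>_. fst V), (\<lambda>f g. \<lambda>i\<in>{..<n}. snd V (f i) (g i)))"

text \<open>Membership in the pseudovariety generated by V: the finite semigroups
  dividing some finite direct power of V.\<close>
definition pv_mem :: "'u set \<times> ('u \<Rightarrow> 'u \<Rightarrow> 'u) \<Rightarrow> 'v set \<times> ('v \<Rightarrow> 'v \<Rightarrow> 'v) \<Rightarrow> bool" where
  "pv_mem U V \<longleftrightarrow> semigroup_on (fst U) (snd U) \<and> (\<exists>n\<ge>1. sg_divides U (sg_power n V))"

definition faithful_action :: "'x set \<Rightarrow> ('x \<Rightarrow> 'a \<Rightarrow> 'x) \<Rightarrow> 'a set \<Rightarrow> ('a \<Rightarrow> 'a \<Rightarrow> 'a) \<Rightarrow> bool" where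
  "faithful_action X act S m \<longleftrightarrow>
     (\<forall>x\<in>X. \<forall>s\<in>S. act x s \<in> X) \<and>
     (\<forall>x\<in>X. \<forall>s\<in>S. \<forall>t\<in>S. act x (m s t) = act (act x s) t) \<and>
     (\<forall>s\<in>S. \<forall>t\<in>S. (\<forall>x\<in>X. act x s = act x t) \<longrightarrow> s = t)"

definition maps_of :: "'x set \<Rightarrow> ('x \<Rightarrow> 'a \<Rightarrow> 'x) \<Rightarrow> 'a set \<Rightarrow> ('x \<Rightarrow> 'x) set" where
  "maps_of X act S = (\<lambda>s. \<lambda>x\<in>X. act x s) ` S"

definition consts_on :: "'x set \<Rightarrow> ('x \<Rightarrow> 'x) set" where
  "consts_on X = (\<lambda>c. \<lambda>x\<in>X. c) ` X"

definition comp_on :: "'x set \<Rightarrow> ('x \<Rightarrow> 'x) \<Rightarrow> ('x \<Rightarrow> 'x) \<Rightarrow> ('x \<Rightarrow> 'x)" where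
  "comp_on X f g = (\<lambda>x\<in>X. g (f x))"

definition with_consts :: "'x set \<Rightarrow> ('x \<Rightarrow> 'a \<Rightarrow> 'x) \<Rightarrow> 'a set \<Rightarrow> ('x \<Rightarrow> 'x) set \<times> (('x \<Rightarrow> 'x) \<Rightarrow> ('x \<Rightarrow> 'x) \<Rightarrow> ('x \<Rightarrow> 'x))" where
  "with_consts X act S = (maps_of X act S \<union> consts_on X, comp_on X)"

definition ts_divides :: "'x set \<times> ('x \<Rightarrow> 'x) set \<Rightarrow> 'y set \<times> ('y \<Rightarrow> 'y) set \<Rightarrow> bool" where
  "ts_divides XS YT \<longleftrightarrow> (\<exists>D phi. D \<subseteq> fst YT \<and> phi ` D = fst XS \<and>
     (\<forall>s\<in>snd XS. \<exists>t\<in>snd YT. \<forall>y\<in>D. t y \<in> D \<and> s (phi y) = phi (t y)))"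

text \<open>S^bullet: S itself if S is a monoid, otherwise S with an external identity
  (represented by None) adjoined.\<close>
definition Sdot :: "'a set \<Rightarrow> ('a \<Rightarrow> 'a \<Rightarrow> 'a) \<Rightarrow> 'a option set" where
  "Sdot S m = (if is_monoid_on S m then Some ` S else insert None (Some ` S))"

fun mdot :: "('a \<Rightarrow> 'a \<Rightarrow> 'a) \<Rightarrow> 'a option \<Rightarrow> 'a option \<Rightarrow> 'a option" where
  "mdot m None y = y"
| "mdot m x None = x"
| "mdot m (Some a) (Some b) = Some (m a b)"

definition rmult :: "('a \<Rightarrow> 'a \<Rightarrow> 'a) \<Rightarrow> 'a option \<Rightarrow> 'a \<Rightarrow> 'a option" where
  "rmult m y s = mdot m y (Some s)"

definition Sbar :: "'a set \<Rightarrow> ('a \<Rightarrow> 'a \<Rightarrow> 'a) \<Rightarrow> ('a option \<Rightarrow> 'a option) set \<times> (('a option \<Rightarrow> 'a option) \<Rightarrow> ('a option \<Rightarrow> 'a option) \<Rightarrow> ('a option \<Rightarrow> 'a option))" where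
  "Sbar S m = with_consts (Sdot S m) (rmult m) S"

definition right_ideal :: "'a set \<Rightarrow> ('a \<Rightarrow> 'a \<Rightarrow> 'a) \<Rightarrow> 'a set \<Rightarrow> bool" where
  "right_ideal S m J \<longleftrightarrow> J \<subseteq> S \<and> J \<noteq> {} \<and> (\<forall>j\<in>J. \<forall>s\<in>S. m j s \<in> J)"

end

theory Submission
  imports Defs
begin

lemma sg_div_trans:
  assumes "sg_divides U V" "sg_divides V W" shows "sg_divides U W"
proof -
  obtain W1 h where W1: "W1 \<subseteq> fst V" "W1 \<noteq> {}" "\<forall>x\<in>W1. \<forall>y\<in>W1. snd V x y \<in> W1"
     "hom_on W1 (snd V) (fst U) (snd U) h" "h ` W1 = fst U"
    using assms(1) unfolding sg_divides_def by blast
  obtain W2 g where W2: "W2 \<subseteq> fst W" "W2 \<noteq> {}" "\<forall>x\<in>W2. \<forall>y\<in>W2. snd W x y \<in> W2"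
     "hom_on W2 (snd W) (fst V) (snd V) g" "g ` W2 = fst V"
    using assms(2) unfolding sg_divides_def by blast
  let ?W = "{x\<in>W2. g x \<in> W1}"
  have gW: "g ` ?W = W1" using W1(1) W2(5) by auto
  show ?thesis unfolding sg_divides_def
  proof (intro exI[of _ ?W] exI[of _ "h \<circ> g"] conjI)
    show "?W \<subseteq> fst W" using W2 by auto
    show "?W \<noteq> {}" using gW W1(2) by auto
    show "\<forall>x\<in>?W. \<forall>y\<in>?W. snd W x y \<in> ?W"
      using W2(3,4) W1(3) unfolding hom_on_def by auto
    show "hom_on ?W (snd W) (fst U) (snd U) (h \<circ> g)"
      using W2(3,4) W1(3,4) unfolding hom_on_def by auto
    show "(h \<circ> g) ` ?W = fst U" using gW W1(5) by (metis image_comp)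
  qed
qed

lemma sg_div_power:
  assumes "sg_divides U V" shows "sg_divides (sg_power n U) (sg_power n V)"
proof -
  obtain W1 h where W1: "W1 \<subseteq> fst V" "W1 \<noteq> {}" "\<forall>x\<in>W1. \<forall>y\<in>W1. snd V x y \<in> W1"
     "hom_on W1 (snd V) (fst U) (snd U) h" "h ` W1 = fst U"
    using assms(1) unfolding sg_divides_def by blast
  let ?W = "PiE {..<n} (\<lambda>_. W1)"
  let ?H = "\<lambda>f. \<lambda>i\<in>{..<n}. h (f i)"
  show ?thesis unfolding sg_divides_def sg_power_def fst_conv snd_conv
  proof (intro exI[of _ ?W] exI[of _ ?H] conjI)
    show "?W \<subseteq> PiE {..<n} (\<lambda>_. fst V)" using W1(1) by (auto intro: PiE_mono)
    show "?W \<noteq> {}" using W1(2) by (simp add: PiE_eq_empty_iff)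
    show "\<forall>x\<in>?W. \<forall>y\<in>?W. (\<lambda>i\<in>{..<n}. snd V (x i) (y i)) \<in> ?W"
      using W1(3) by auto
    show "hom_on ?W (\<lambda>f g. \<lambda>i\<in>{..<n}. snd V (f i) (g i)) (PiE {..<n} (\<lambda>_. fst U))
          (\<lambda>f g. \<lambda>i\<in>{..<n}. snd U (f i) (g i)) ?H"
      using W1(4) unfolding hom_on_def by (auto simp: PiE_iff intro!: ext)
    show "?H ` ?W = PiE {..<n} (\<lambda>_. fst U)"
    proof
      show "?H ` ?W \<subseteq> PiE {..<n} (\<lambda>_. fst U)" using W1(5) by fastforce
      show "PiE {..<n} (\<lambda>_. fst U) \<subseteq> ?H ` ?W"
      proof
        fix F assume F: "F \<in> PiE {..<n} (\<lambda>_. fst U)"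
        define f where "f = (\<lambda>i\<in>{..<n}. SOME w. w \<in> W1 \<and> h w = F i)"
        have sp: "\<And>i. i < n \<Longrightarrow> f i \<in> W1 \<and> h (f i) = F i"
        proof -
          fix i assume "i < n"
          then have "F i \<in> h ` W1" using F W1(5) by auto
          then have "\<exists>w. w \<in> W1 \<and> h w = F i" by auto
          then show "f i \<in> W1 \<and> h (f i) = F i" unfolding f_def using \<open>i<n\<close>
            by (simp add: someI_ex[of "\<lambda>w. w \<in> W1 \<and> h w = F i"])
        qed
        have "f \<in> ?W" using sp unfolding f_def[symmetric] by (auto simp: f_def)
        moreover have "?H f = F" using sp F by (auto intro!: ext simp: PiE_iff extensional_def)
        ultimately show "F \<in> ?H ` ?W" by force
      qed
    qed
  qed
qed

lemma sg_div_powpow: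
  assumes "fst V \<noteq> {}" and cl: "\<forall>x\<in>fst V. \<forall>y\<in>fst V. snd V x y \<in> fst V"
  shows "sg_divides (sg_power n (sg_power k V)) (sg_power (n*k) V)"
proof -
  let ?H = "\<lambda>f. \<lambda>i\<in>{..<n}. \<lambda>j\<in>{..<k}. f (i*k+j)"
  have lt: "\<And>i j. i < n \<Longrightarrow> j < k \<Longrightarrow> i*k+j < n*k"
  proof -
    fix i j assume "i < n" "j < k"
    then have "i*k + j < i*k + k" by simp
    also have "\<dots> = (Suc i) * k" by simp
    also have "\<dots> \<le> n * k" using \<open>i<n\<close> by (intro mult_right_mono) auto
    finally show "i*k+j < n*k" .
  qed
  show ?thesis unfolding sg_divides_def sg_power_def fst_conv snd_conv
  proof (intro exI[of _ "PiE {..<n*k} (\<lambda>_. fst V)"] exI[of _ ?H] conjI)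
    show "PiE {..<n*k} (\<lambda>_. fst V) \<noteq> {}" using assms by (simp add: PiE_eq_empty_iff)
    show "\<forall>x\<in>PiE {..<n*k} (\<lambda>_. fst V). \<forall>y\<in>PiE {..<n*k} (\<lambda>_. fst V).
       (\<lambda>i\<in>{..<n*k}. snd V (x i) (y i)) \<in> PiE {..<n*k} (\<lambda>_. fst V)"
      using cl by (auto simp: PiE_iff)
    show "hom_on (PiE {..<n*k} (\<lambda>_. fst V)) (\<lambda>f g. \<lambda>i\<in>{..<n*k}. snd V (f i) (g i))
     (PiE {..<n} (\<lambda>_. PiE {..<k} (\<lambda>_. fst V)))
     (\<lambda>f g. \<lambda>i\<in>{..<n}. (\<lambda>f g. \<lambda>i\<in>{..<k}. snd V (f i) (g i)) (f i) (g i)) ?H"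
      unfolding hom_on_def using lt by (auto intro!: ext)
    show "?H ` PiE {..<n*k} (\<lambda>_. fst V) = PiE {..<n} (\<lambda>_. PiE {..<k} (\<lambda>_. fst V))"
    proof
      show "?H ` PiE {..<n*k} (\<lambda>_. fst V) \<subseteq> PiE {..<n} (\<lambda>_. PiE {..<k} (\<lambda>_. fst V))"
        using lt by auto
      show "PiE {..<n} (\<lambda>_. PiE {..<k} (\<lambda>_. fst V)) \<subseteq> ?H ` PiE {..<n*k} (\<lambda>_. fst V)"
      proof
        fix F assume F: "F \<in> PiE {..<n} (\<lambda>_. PiE {..<k} (\<lambda>_. fst V))"
        define f where "f = (\<lambda>p\<in>{..<n*k}. F (p div k) (p mod k))"
        have "f \<in> PiE {..<n*k} (\<lambda>_. fst V)"
        proof -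
          have "\<And>p. p < n*k \<Longrightarrow> F (p div k) (p mod k) \<in> fst V"
          proof -
            fix p assume p: "p < n*k"
            then have kp: "k > 0" by (cases k) auto
            have "p div k < n" using p kp by (simp add: div_less_iff_less_mult)
            moreover have "p mod k < k" using kp by simp
            ultimately show "F (p div k) (p mod k) \<in> fst V" using F by auto
          qed
          then show ?thesis unfolding f_def by auto
        qed
        moreover have "?H f = F"
        proof (rule ext)
          fix i show "?H f i = F i"
          proof (cases "i < n")
            case True
            then have Fi: "F i \<in> PiE {..<k} (\<lambda>_. fst V)" using F by auto
            show ?thesis
            proof (rule ext)
              fix j show "?H f i j = F i j"
                using True lt Fi by (cases "j < k") (auto simp: f_def extensional_def PiE_iff)
            qed
          next
            case False then show ?thesis using F by (auto simp: PiE_iff extensional_def)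
          qed
        qed
        ultimately show "F \<in> ?H ` PiE {..<n*k} (\<lambda>_. fst V)" by force
      qed
    qed
  qed simp
qed


lemma pv_transfer1:
  assumes d: "sg_divides A B" and u: "pv_mem U A"
  shows "pv_mem U B"
proof -
  obtain n where n: "n \<ge> 1" "sg_divides U (sg_power n A)" and sU: "semigroup_on (fst U) (snd U)"
    using u unfolding pv_mem_def by blast
  have "sg_divides (sg_power n A) (sg_power n B)" using d by (rule sg_div_power)
  then have "sg_divides U (sg_power n B)" using n(2) by (blast intro: sg_div_trans)
  then show ?thesis using sU n(1) unfolding pv_mem_def by blast
qed

lemma pv_transfer:
  assumes d: "sg_divides A (sg_power k B)" and k: "k \<ge> 1" and ne: "fst B \<noteq> {}"
    and cl: "\<forall>x\<in>fst B. \<forall>y\<in>fst B. snd B x y \<in> fst B"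
    and u: "pv_mem U A"
  shows "pv_mem U B"
proof -
  obtain n where n: "n \<ge> 1" "sg_divides U (sg_power n A)" and sU: "semigroup_on (fst U) (snd U)"
    using u unfolding pv_mem_def by blast
  have "sg_divides (sg_power n A) (sg_power n (sg_power k B))" using d by (rule sg_div_power)
  moreover have "sg_divides (sg_power n (sg_power k B)) (sg_power (n*k) B)"
    using ne cl by (rule sg_div_powpow)
  ultimately have "sg_divides U (sg_power (n*k) B)" using n(2) by (blast intro: sg_div_trans)
  moreover have "n*k \<ge> 1" using n k by simp
  ultimately show ?thesis using sU unfolding pv_mem_def by blast
qed

lemma wc_closed:
  assumes cl: "\<forall>x\<in>X. \<forall>s\<in>S. act x s \<in> X"
    and cp: "\<forall>x\<in>X. \<forall>s\<in>S. \<forall>t\<in>S. act x (m s t) = act (act x s) t"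
    and mS: "\<forall>s\<in>S. \<forall>t\<in>S. m s t \<in> S"
    and f: "f \<in> maps_of X act S \<union> consts_on X" and g: "g \<in> maps_of X act S \<union> consts_on X"
  shows "comp_on X f g \<in> maps_of X act S \<union> consts_on X"
proof -
  from f g consider
      (a) s t where "s \<in> S" "t \<in> S" "f = (\<lambda>x\<in>X. act x s)" "g = (\<lambda>x\<in>X. act x t)"
    | (b) s c where "s \<in> S" "c \<in> X" "f = (\<lambda>x\<in>X. act x s)" "g = (\<lambda>x\<in>X. c)"
    | (c) c t where "c \<in> X" "t \<in> S" "f = (\<lambda>x\<in>X. c)" "g = (\<lambda>x\<in>X. act x t)"
    | (d) c d where "c \<in> X" "d \<in> X" "f = (\<lambda>x\<in>X. c)" "g = (\<lambda>x\<in>X. d)"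
    unfolding maps_of_def consts_on_def by blast
  then show ?thesis
  proof cases
    case a
    then have "comp_on X f g = (\<lambda>x\<in>X. act x (m s t))"
      using cl cp by (auto simp: comp_on_def intro!: ext)
    then show ?thesis using a mS unfolding maps_of_def by blast
  next
    case b
    then have "comp_on X f g = (\<lambda>x\<in>X. c)"
      using cl by (auto simp: comp_on_def intro!: ext)
    then show ?thesis using b unfolding consts_on_def by blast
  next
    case c
    then have "comp_on X f g = (\<lambda>x\<in>X. act c t)"
      by (auto simp: comp_on_def intro!: ext)
    then show ?thesis using c cl unfolding consts_on_def by blast
  next
    case d
    then have "comp_on X f g = (\<lambda>x\<in>X. d)"
      by (auto simp: comp_on_def intro!: ext)
    then show ?thesis using d unfolding consts_on_def by blast
  qed
qed

lemma wc_ext: "f \<in> maps_of X act S \<union> consts_on X \<Longrightarrow> f \<in> extensional X"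
  unfolding maps_of_def consts_on_def by auto

lemma Some_Sdot: "s \<in> S \<Longrightarrow> Some s \<in> Sdot S m"
  unfolding Sdot_def by auto

lemma Sdot_cases: "y \<in> Sdot S m \<Longrightarrow> (y = None \<Longrightarrow> \<not> is_monoid_on S m \<Longrightarrow> P) \<Longrightarrow> (\<And>s. y = Some s \<Longrightarrow> s \<in> S \<Longrightarrow> P) \<Longrightarrow> P"
  unfolding Sdot_def by (auto split: if_splits)

lemma rmult_cl:
  assumes "semigroup_on S m" shows "\<forall>x\<in>Sdot S m. \<forall>s\<in>S. rmult m x s \<in> Sdot S m"
proof (intro ballI)
  fix x s assume x: "x \<in> Sdot S m" and s: "s \<in> S"
  show "rmult m x s \<in> Sdot S m"
    using x
  proof (rule Sdot_cases)
    assume "x = None" then show ?thesis using s by (simp add: rmult_def Some_Sdot)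
  next
    fix a assume "x = Some a" "a \<in> S"
    then show ?thesis using s assms by (simp add: rmult_def Some_Sdot semigroup_on_def)
  qed
qed

lemma rmult_comp:
  assumes "semigroup_on S m"
  shows "\<forall>x\<in>Sdot S m. \<forall>s\<in>S. \<forall>t\<in>S. rmult m x (m s t) = rmult m (rmult m x s) t"
proof (intro ballI)
  fix x s t assume x: "x \<in> Sdot S m" and s: "s \<in> S" and t: "t \<in> S"
  show "rmult m x (m s t) = rmult m (rmult m x s) t"
    using x
  proof (rule Sdot_cases)
    assume "x = None" then show ?thesis by (simp add: rmult_def)
  next
    fix a assume "x = Some a" "a \<in> S"
    then show ?thesis using s t assms by (simp add: rmult_def semigroup_on_def)
  qed
qed

lemma Sbar_closed:
  assumes "semigroup_on S m"
  shows "\<forall>x\<in>fst (Sbar S m). \<forall>y\<in>fst (Sbar S m). snd (Sbar S m) x y \<in> fst (Sbar S m)"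
  unfolding Sbar_def with_consts_def fst_conv snd_conv
  using wc_closed[OF rmult_cl[OF assms] rmult_comp[OF assms]] assms
  unfolding semigroup_on_def by blast

lemma wc_closed2:
  assumes "semigroup_on S m" "faithful_action X act S m"
  shows "\<forall>x\<in>fst (with_consts X act S). \<forall>y\<in>fst (with_consts X act S).
     snd (with_consts X act S) x y \<in> fst (with_consts X act S)"
  unfolding with_consts_def fst_conv snd_conv
  using wc_closed[of X S act m] assms
  unfolding semigroup_on_def faithful_action_def by blast

lemma Sbar_ne: "semigroup_on S m \<Longrightarrow> fst (Sbar S m) \<noteq> {}"
  unfolding Sbar_def with_consts_def maps_of_def semigroup_on_def by auto

lemma wc_ne: "semigroup_on S m \<Longrightarrow> fst (with_consts X act S) \<noteq> {}"
  unfolding with_consts_def maps_of_def semigroup_on_def by auto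


lemma dir1:
  assumes sg: "semigroup_on S m" and fa: "faithful_action X act S m"
    and td: "ts_divides (X, maps_of X act S) (Sdot S m, maps_of (Sdot S m) (rmult m) S)"
  shows "sg_divides (with_consts X act S) (Sbar S m)"
proof -
  let ?A = "maps_of X act S \<union> consts_on X"
  let ?Sd = "Sdot S m"
  let ?B = "maps_of ?Sd (rmult m) S \<union> consts_on ?Sd"
  obtain D phi where D: "D \<subseteq> ?Sd" "phi ` D = X"
    and cov: "\<forall>s\<in>maps_of X act S. \<exists>t\<in>maps_of ?Sd (rmult m) S. \<forall>y\<in>D. t y \<in> D \<and> s (phi y) = phi (t y)"
    using td unfolding ts_divides_def by auto
  have clA: "\<forall>f\<in>?A. \<forall>g\<in>?A. comp_on X f g \<in> ?A"
    using wc_closed2[OF sg fa] unfolding with_consts_def by simp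
  have clB: "\<forall>f\<in>?B. \<forall>g\<in>?B. comp_on ?Sd f g \<in> ?B"
    using Sbar_closed[OF sg] unfolding Sbar_def with_consts_def by simp
  define P where "P f a \<longleftrightarrow> a \<in> ?A \<and> (\<forall>y\<in>D. a (phi y) = phi (f y))" for f a
  have uniq: "P f a \<Longrightarrow> P f a' \<Longrightarrow> a = a'" for f a a'
  proof -
    assume "P f a" "P f a'"
    then have e: "a \<in> extensional X" "a' \<in> extensional X" and
       v: "\<forall>y\<in>D. a (phi y) = a' (phi y)"
      unfolding P_def using wc_ext by auto
    show "a = a'"
    proof (rule extensionalityI[OF e])
      fix x assume "x \<in> X"
      then obtain y where "y \<in> D" "x = phi y" using D(2) by auto
      then show "a x = a' x" using v by simp
    qed
  qed
  define W where "W = {f\<in>?B. (\<forall>y\<in>D. f y \<in> D) \<and> (\<exists>a. P f a)}"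
  define h where "h f = (SOME a. P f a)" for f
  have hP: "f \<in> W \<Longrightarrow> P f (h f)" for f
  proof -
    assume "f \<in> W" then obtain a where "P f a" unfolding W_def by blast
    then show "P f (h f)" unfolding h_def by (metis someI_ex)
  qed
  have hI: "P f a \<Longrightarrow> h f = a" for f a
    using uniq unfolding h_def by (blast intro: someI)
  have covW: "a \<in> maps_of X act S \<Longrightarrow> \<exists>t\<in>W. h t = a" for a
  proof -
    assume a: "a \<in> maps_of X act S"
    then obtain t where t: "t \<in> maps_of ?Sd (rmult m) S" "\<forall>y\<in>D. t y \<in> D \<and> a (phi y) = phi (t y)"
      using cov by blast
    then have "P t a" unfolding P_def using a by auto
    moreover then have "t \<in> W" unfolding W_def using t by auto
    ultimately show ?thesis using hI by blast
  qed
  show ?thesis unfolding sg_divides_def Sbar_def with_consts_def fst_conv snd_conv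
  proof (intro exI[of _ W] exI[of _ h] conjI)
    show "W \<subseteq> ?B" unfolding W_def by auto
    have "maps_of X act S \<noteq> {}" using sg unfolding maps_of_def semigroup_on_def by auto
    then show "W \<noteq> {}" using covW by blast
    show "\<forall>f\<in>W. \<forall>g\<in>W. comp_on ?Sd f g \<in> W"
    proof (intro ballI)
      fix f g assume f: "f \<in> W" and g: "g \<in> W"
      have "P (comp_on ?Sd f g) (comp_on X (h f) (h g))"
        using hP[OF f] hP[OF g] f g clA D(1,2) unfolding P_def W_def comp_on_def by auto
      then show "comp_on ?Sd f g \<in> W" using f g clB D(1) unfolding W_def comp_on_def
        by (auto simp: subset_iff)
    qed
    show "hom_on W (comp_on ?Sd) ?A (comp_on X) h"
      unfolding hom_on_def
    proof (intro conjI ballI)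
      fix f assume "f \<in> W" then show "h f \<in> ?A" using hP unfolding P_def by blast
    next
      fix f g assume f: "f \<in> W" and g: "g \<in> W"
      have "P (comp_on ?Sd f g) (comp_on X (h f) (h g))"
        using hP[OF f] hP[OF g] f g clA D(1,2) unfolding P_def W_def comp_on_def by auto
      then show "h (comp_on ?Sd f g) = comp_on X (h f) (h g)" by (rule hI)
    qed
    show "h ` W = ?A"
    proof
      show "h ` W \<subseteq> ?A" using hP unfolding P_def by blast
      show "?A \<subseteq> h ` W"
      proof
        fix a assume a: "a \<in> ?A"
        show "a \<in> h ` W"
        proof (cases "a \<in> maps_of X act S")
          case True then show ?thesis using covW by force
        next
          case False
          then obtain c where c: "c \<in> X" "a = (\<lambda>x\<in>X. c)" using a unfolding consts_on_def by auto
          then obtain y0 where y0: "y0 \<in> D" "c = phi y0" using D(2) by auto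
          let ?f = "\<lambda>z\<in>?Sd. y0"
          have Pf: "P ?f a" unfolding P_def using a c y0 D by auto
          moreover have "?f \<in> W" unfolding W_def using Pf y0 D(1)
            by (auto simp: consts_on_def)
          ultimately show ?thesis using hI by force
        qed
      qed
    qed
  qed
qed


lemma ident_monoid:
  assumes sg: "semigroup_on S m" and fa: "faithful_action X act S m" and b: "b \<in> S"
    and id: "\<forall>x\<in>X. act x b = x"
  shows "is_monoid_on S m"
proof -
  from fa have cl: "\<forall>x\<in>X. \<forall>s\<in>S. act x s \<in> X" and cp: "\<forall>x\<in>X. \<forall>s\<in>S. \<forall>t\<in>S. act x (m s t) = act (act x s) t"
    and inj: "\<forall>s\<in>S. \<forall>t\<in>S. (\<forall>x\<in>X. act x s = act x t) \<longrightarrow> s = t"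
    unfolding faithful_action_def by blast+
  have mS: "\<forall>s\<in>S. \<forall>t\<in>S. m s t \<in> S" using sg unfolding semigroup_on_def by blast
  have "\<forall>s\<in>S. m b s = s \<and> m s b = s"
  proof
    fix s assume s: "s \<in> S"
    have "\<forall>x\<in>X. act x (m b s) = act x s" using cp id b s by simp
    then have 1: "m b s = s" using inj mS b s by blast
    have "\<forall>x\<in>X. act x (m s b) = act x s" using cp id cl b s by simp
    then have 2: "m s b = s" using inj mS b s by blast
    show "m b s = s \<and> m s b = s" using 1 2 by blast
  qed
  then show ?thesis unfolding is_monoid_on_def using b by blast
qed

definition actd :: "('x \<Rightarrow> 'a \<Rightarrow> 'x) \<Rightarrow> 'x \<Rightarrow> 'a option \<Rightarrow> 'x" where
  "actd act x y = (case y of None \<Rightarrow> x | Some s \<Rightarrow> act x s)"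

lemma actd_cl: "\<forall>x\<in>X. \<forall>s\<in>S. act x s \<in> X \<Longrightarrow> x \<in> X \<Longrightarrow> y \<in> Sdot S m \<Longrightarrow> actd act x y \<in> X"
  by (erule Sdot_cases) (auto simp: actd_def)

lemma actd_rmult: "\<forall>x\<in>X. \<forall>s\<in>S. \<forall>t\<in>S. act x (m s t) = act (act x s) t \<Longrightarrow> x \<in> X \<Longrightarrow> y \<in> Sdot S m
  \<Longrightarrow> t \<in> S \<Longrightarrow> actd act x (rmult m y t) = act (actd act x y) t"
  by (erule Sdot_cases) (auto simp: actd_def rmult_def)

lemma g1: "\<forall>x\<in>X. \<forall>s\<in>S. act x s \<in> X \<Longrightarrow> \<forall>x\<in>X. \<forall>s\<in>S. \<forall>t\<in>S. act x (m s t) = act (act x s) t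
  \<Longrightarrow> s \<in> S \<Longrightarrow> t \<in> S \<Longrightarrow> comp_on X (\<lambda>x\<in>X. act x s) (\<lambda>x\<in>X. act x t) = (\<lambda>x\<in>X. act x (m s t))"
  by (auto simp: comp_on_def intro!: ext)
lemma g2: "\<forall>x\<in>X. \<forall>s\<in>S. act x s \<in> X \<Longrightarrow> s \<in> S \<Longrightarrow> comp_on X (\<lambda>x\<in>X. act x s) (\<lambda>x\<in>X. c) = (\<lambda>x\<in>X. c)"
  by (auto simp: comp_on_def intro!: ext)
lemma g3: "c \<in> X \<Longrightarrow> comp_on X (\<lambda>x\<in>X. c) (\<lambda>x\<in>X. act x t) = (\<lambda>x\<in>X. act c t)"
  by (auto simp: comp_on_def intro!: ext)
lemma g4: "c \<in> X \<Longrightarrow> comp_on X (\<lambda>x\<in>X. c) (\<lambda>x\<in>X. d) = (\<lambda>x\<in>X. d)"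
  by (auto simp: comp_on_def intro!: ext)

lemma dir2:
  fixes S :: "'a set" and X :: "'x set"
  assumes sg: "semigroup_on S m" and fa: "faithful_action X act S m"
    and fin: "finite X" and Xne: "X \<noteq> {}"
  shows "\<exists>n\<ge>1. sg_divides (Sbar S m) (sg_power n (with_consts X act S))"
proof -
  from fa have cl: "\<forall>x\<in>X. \<forall>s\<in>S. act x s \<in> X" and cp: "\<forall>x\<in>X. \<forall>s\<in>S. \<forall>t\<in>S. act x (m s t) = act (act x s) t"
    and inj: "\<forall>s\<in>S. \<forall>t\<in>S. (\<forall>x\<in>X. act x s = act x t) \<longrightarrow> s = t"
    unfolding faithful_action_def by blast+
  have mS: "\<forall>s\<in>S. \<forall>t\<in>S. m s t \<in> S" using sg unfolding semigroup_on_def by blast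
  let ?Sd = "Sdot S m"
  let ?A = "maps_of X act S \<union> consts_on X"
  define n where "n = card X"
  have n1: "n \<ge> 1" using fin Xne unfolding n_def by (simp add: Suc_le_eq card_gt_0_iff)
  obtain e where e: "bij_betw e {0..<n} X" unfolding n_def using ex_bij_betw_nat_finite[OF fin] by blast
  have eX: "i < n \<Longrightarrow> e i \<in> X" for i using e by (auto dest: bij_betw_apply)
  have Xe: "x \<in> X \<Longrightarrow> \<exists>i<n. e i = x" for x using e unfolding bij_betw_def by force
  define rho where "rho s = (\<lambda>y\<in>?Sd. rmult m y s)" for s
  define cc where "cc y = (\<lambda>z\<in>?Sd. y)" for y :: "'a option"
  define Ms where "Ms s = (\<lambda>x\<in>X. act x s)" for s
  define Hs where "Hs s = (\<lambda>i\<in>{..<n}. Ms s)" for s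
  define Hc where "Hc y = (\<lambda>i\<in>{..<n}. (\<lambda>z\<in>X. actd act (e i) y))" for y
  define Pr where "Pr w1 w2 = (\<lambda>i\<in>{..<n}. comp_on X (w1 i) (w2 i))" for w1 w2 :: "nat \<Rightarrow> 'x \<Rightarrow> 'x"
  have cl2: "\<forall>x\<in>?Sd. \<forall>s\<in>S. rmult m x s \<in> ?Sd" by (rule rmult_cl[OF sg])
  have cp2: "\<forall>x\<in>?Sd. \<forall>s\<in>S. \<forall>t\<in>S. rmult m x (m s t) = rmult m (rmult m x s) t" by (rule rmult_comp[OF sg])
  have P1: "s \<in> S \<Longrightarrow> t \<in> S \<Longrightarrow> Pr (Hs s) (Hs t) = Hs (m s t)" for s t
    unfolding Pr_def Hs_def Ms_def using g1[OF cl cp] by (auto intro!: ext)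
  have P2: "s \<in> S \<Longrightarrow> y \<in> ?Sd \<Longrightarrow> Pr (Hs s) (Hc y) = Hc y" for s y
    unfolding Pr_def Hs_def Hc_def Ms_def using g2[OF cl] by (auto intro!: ext)
  have P3: "y \<in> ?Sd \<Longrightarrow> t \<in> S \<Longrightarrow> Pr (Hc y) (Hs t) = Hc (rmult m y t)" for y t
    unfolding Pr_def Hs_def Hc_def Ms_def comp_on_def
    using actd_cl[OF cl] actd_rmult[OF cp] eX by (auto intro!: ext)
  have P4: "y \<in> ?Sd \<Longrightarrow> z \<in> ?Sd \<Longrightarrow> Pr (Hc y) (Hc z) = Hc z" for y z
    unfolding Pr_def Hc_def comp_on_def using actd_cl[OF cl] eX by (auto intro!: ext)
  have Q1: "s \<in> S \<Longrightarrow> t \<in> S \<Longrightarrow> comp_on ?Sd (rho s) (rho t) = rho (m s t)" for s t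
    unfolding rho_def comp_on_def using cl2 cp2 by (auto intro!: ext)
  have Q2: "s \<in> S \<Longrightarrow> comp_on ?Sd (rho s) (cc y) = cc y" for s y
    unfolding rho_def cc_def comp_on_def using cl2 by (auto intro!: ext)
  have Q3: "y \<in> ?Sd \<Longrightarrow> comp_on ?Sd (cc y) (rho t) = cc (rmult m y t)" for y t
    unfolding rho_def cc_def comp_on_def by (auto intro!: ext)
  have Q4: "y \<in> ?Sd \<Longrightarrow> comp_on ?Sd (cc y) (cc z) = cc z" for y z
    unfolding cc_def comp_on_def by (auto intro!: ext)
  have coordHc: "Hc y = Hc z \<Longrightarrow> x \<in> X \<Longrightarrow> actd act x y = actd act x z" for y z x
  proof -
    assume h: "Hc y = Hc z" and x: "x \<in> X"
    obtain i where i: "i < n" "e i = x" using Xe[OF x] by blast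
    have "Hc y i x = Hc z i x" using h by simp
    then show ?thesis using i x unfolding Hc_def by simp
  qed
  have injHs: "s \<in> S \<Longrightarrow> t \<in> S \<Longrightarrow> Hs s = Hs t \<Longrightarrow> s = t" for s t
  proof -
    assume s: "s \<in> S" and t: "t \<in> S" and h: "Hs s = Hs t"
    have "\<forall>x\<in>X. act x s = act x t"
    proof
      fix x assume x: "x \<in> X"
      have "Hs s 0 x = Hs t 0 x" using h by simp
      then show "act x s = act x t" using n1 x unfolding Hs_def Ms_def by simp
    qed
    then show "s = t" using inj s t by blast
  qed
  have injHc: "y \<in> ?Sd \<Longrightarrow> z \<in> ?Sd \<Longrightarrow> Hc y = Hc z \<Longrightarrow> y = z" for y z
  proof -
    assume y: "y \<in> ?Sd" and z: "z \<in> ?Sd" and h: "Hc y = Hc z"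
    have eq: "\<forall>x\<in>X. actd act x y = actd act x z" using coordHc[OF h] by blast
    have noid: "\<not> is_monoid_on S m \<Longrightarrow> b \<in> S \<Longrightarrow> \<forall>x\<in>X. act x b = x \<Longrightarrow> False" for b
      using ident_monoid[OF sg fa] by blast
    show "y = z"
      using y
    proof (rule Sdot_cases)
      assume y0: "y = None" and nm: "\<not> is_monoid_on S m"
      show "y = z" using z
      proof (rule Sdot_cases)
        fix b assume "z = Some b" "b \<in> S"
        then show "y = z" using eq y0 noid[OF nm] by (force simp: actd_def)
      qed (simp add: y0)
    next
      fix a assume ya: "y = Some a" and a: "a \<in> S"
      show "y = z" using z
      proof (rule Sdot_cases)
        assume "z = None" and nm: "\<not> is_monoid_on S m"
        then show "y = z" using eq ya a noid[OF nm] by (force simp: actd_def)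
      next
        fix b assume "z = Some b" "b \<in> S"
        then show "y = z" using eq ya a inj by (simp add: actd_def)
      qed
    qed
  qed
  have noid: "\<not> is_monoid_on S m \<Longrightarrow> b \<in> S \<Longrightarrow> \<forall>x\<in>X. act x b = x \<Longrightarrow> False" for b
    using ident_monoid[OF sg fa] by blast
  have mix: "s \<in> S \<Longrightarrow> y \<in> ?Sd \<Longrightarrow> Hs s = Hc y \<Longrightarrow> rho s = cc y" for s y
  proof -
    assume s: "s \<in> S" and y: "y \<in> ?Sd" and h: "Hs s = Hc y"
    have all: "\<forall>x\<in>X. \<forall>z\<in>X. act z s = actd act x y"
    proof (intro ballI)
      fix x z assume x: "x \<in> X" and z: "z \<in> X"
      obtain i where i: "i < n" "e i = x" using Xe[OF x] by blast
      have "Hs s i z = Hc y i z" using h by simp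
      then show "act z s = actd act x y" using i z unfolding Hs_def Hc_def Ms_def by simp
    qed
    show "rho s = cc y"
      using y
    proof (rule Sdot_cases)
      assume "y = None" and nm: "\<not> is_monoid_on S m"
      then have "\<forall>x\<in>X. act x s = x" using all by (simp add: actd_def)
      then show ?thesis using noid[OF nm s] by blast
    next
      fix a assume ya: "y = Some a" and a: "a \<in> S"
      have "\<forall>x\<in>X. act x s = act x a" using all ya by (simp add: actd_def)
      then have sa: "s = a" using inj s a by blast
      have cst: "act z s = act x s" if "z \<in> X" "x \<in> X" for z x
        using all that by metis
      have rz: "m t s = s" if t: "t \<in> S" for t
      proof -
        have "\<forall>x\<in>X. act x (m t s) = act x s"
        proof
          fix x assume x: "x \<in> X"
          have "act x (m t s) = act (act x t) s" using cp x t s by blast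
          also have "\<dots> = act x s" using cst[of "act x t" x] cl x t by blast
          finally show "act x (m t s) = act x s" .
        qed
        then show ?thesis using inj mS t s by blast
      qed
      show ?thesis
      proof (rule ext)
        fix v show "rho s v = cc y v"
        proof (cases "v \<in> ?Sd")
          case True
          then show ?thesis
          proof (rule Sdot_cases)
            assume "v = None" then show ?thesis using True ya sa unfolding rho_def cc_def rmult_def by simp
          next
            fix t assume "v = Some t" "t \<in> S"
            then show ?thesis using True ya sa rz unfolding rho_def cc_def rmult_def by simp
          qed
        next
          case False then show ?thesis unfolding rho_def cc_def by simp
        qed
      qed
    qed
  qed
  define W where "W = Hs ` S \<union> Hc ` ?Sd"
  define g where "g w = (if w \<in> Hs ` S then rho (SOME s. s \<in> S \<and> Hs s = w)
     else cc (SOME y. y \<in> ?Sd \<and> Hc y = w))" for w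
  have gHs: "s \<in> S \<Longrightarrow> g (Hs s) = rho s" for s
  proof -
    assume s: "s \<in> S"
    have "(SOME s'. s' \<in> S \<and> Hs s' = Hs s) = s"
      using s injHs by (intro some_equality) auto
    then show ?thesis using s unfolding g_def by simp
  qed
  have gHc: "y \<in> ?Sd \<Longrightarrow> g (Hc y) = cc y" for y
  proof -
    assume y: "y \<in> ?Sd"
    show ?thesis
    proof (cases "Hc y \<in> Hs ` S")
      case True
      then have ex: "\<exists>s. s \<in> S \<and> Hs s = Hc y" by auto
      define s where "s = (SOME s. s \<in> S \<and> Hs s = Hc y)"
      have "s \<in> S \<and> Hs s = Hc y" unfolding s_def using someI_ex[OF ex] .
      then have "rho s = cc y" using mix y by blast
      then show ?thesis using True unfolding g_def s_def by simp
    next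
      case False
      have "(SOME y'. y' \<in> ?Sd \<and> Hc y' = Hc y) = y"
        using y injHc by (intro some_equality) auto
      then show ?thesis using False unfolding g_def by simp
    qed
  qed
  have rhoB: "maps_of ?Sd (rmult m) S = rho ` S" unfolding maps_of_def rho_def by simp
  have ccB: "consts_on ?Sd = cc ` ?Sd" unfolding consts_on_def cc_def by simp
  have WA: "W \<subseteq> PiE {..<n} (\<lambda>_. ?A)"
  proof
    fix w assume "w \<in> W"
    then consider (s) s where "s \<in> S" "w = Hs s" | (y) y where "y \<in> ?Sd" "w = Hc y"
      unfolding W_def by blast
    then show "w \<in> PiE {..<n} (\<lambda>_. ?A)"
    proof cases
      case s
      have "Ms s \<in> ?A" using s unfolding Ms_def maps_of_def by blast
      then show ?thesis using s unfolding Hs_def by simp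
    next
      case y
      have "\<And>i. i < n \<Longrightarrow> (\<lambda>z\<in>X. actd act (e i) y) \<in> consts_on X"
        using actd_cl[OF cl eX y(1)] unfolding consts_on_def by blast
      then show ?thesis using y unfolding Hc_def by simp
    qed
  qed
  have Wcl: "w1 \<in> W \<Longrightarrow> w2 \<in> W \<Longrightarrow> Pr w1 w2 \<in> W \<and> g (Pr w1 w2) = comp_on ?Sd (g w1) (g w2)" for w1 w2
  proof -
    assume "w1 \<in> W" "w2 \<in> W"
    then consider (ss) s t where "s \<in> S" "t \<in> S" "w1 = Hs s" "w2 = Hs t"
      | (sy) s y where "s \<in> S" "y \<in> ?Sd" "w1 = Hs s" "w2 = Hc y"
      | (ys) y t where "y \<in> ?Sd" "t \<in> S" "w1 = Hc y" "w2 = Hs t"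
      | (yy) y z where "y \<in> ?Sd" "z \<in> ?Sd" "w1 = Hc y" "w2 = Hc z"
      unfolding W_def by blast
    then show ?thesis
    proof cases
      case ss then show ?thesis using P1 Q1 gHs mS unfolding W_def by auto
    next
      case sy then show ?thesis using P2 Q2 gHs gHc unfolding W_def by auto
    next
      case ys then show ?thesis using P3 Q3 gHs gHc cl2 unfolding W_def by auto
    next
      case yy then show ?thesis using P4 Q4 gHc unfolding W_def by auto
    qed
  qed
  have Pr_eq: "(\<lambda>f g. \<lambda>i\<in>{..<n}. comp_on X (f i) (g i)) = Pr" unfolding Pr_def by (intro ext) simp
  have gW: "g ` W = maps_of ?Sd (rmult m) S \<union> consts_on ?Sd"
    unfolding rhoB ccB W_def image_Un using gHs gHc by (auto simp: image_iff)
  have "sg_divides (Sbar S m) (sg_power n (with_consts X act S))"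
    unfolding sg_divides_def sg_power_def Sbar_def with_consts_def fst_conv snd_conv Pr_eq
  proof (intro exI[of _ W] exI[of _ g] conjI)
    show "W \<subseteq> PiE {..<n} (\<lambda>_. ?A)" by (rule WA)
    show "W \<noteq> {}" using sg unfolding W_def semigroup_on_def by auto
    show "\<forall>x\<in>W. \<forall>y\<in>W. Pr x y \<in> W" using Wcl by blast
    show "hom_on W Pr (maps_of ?Sd (rmult m) S \<union> consts_on ?Sd) (comp_on ?Sd) g"
      unfolding hom_on_def using Wcl gW by blast
    show "g ` W = maps_of ?Sd (rmult m) S \<union> consts_on ?Sd" by (rule gW)
  qed
  then show ?thesis using n1 by blast
qed


lemma dir2_empty:
  fixes S :: "'a set" and X :: "'x set"
  assumes sg: "semigroup_on S m" and fa: "faithful_action X act S m" and Xe: "X = {}"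
  shows "sg_divides (Sbar S m) (with_consts X act S)"
proof -
  obtain s0 where s0: "s0 \<in> S" using sg unfolding semigroup_on_def by auto
  have inj: "\<forall>s\<in>S. \<forall>t\<in>S. s = t" using fa Xe unfolding faithful_action_def by simp
  have S1: "S = {s0}" using inj s0 by blast
  have mss: "m s0 s0 = s0" using sg S1 unfolding semigroup_on_def by auto
  have mon: "is_monoid_on S m" unfolding is_monoid_on_def using S1 mss by auto
  have Sd: "Sdot S m = {Some s0}" using mon S1 unfolding Sdot_def by simp
  let ?c = "\<lambda>z\<in>{Some s0}. Some s0"
  have B1: "fst (Sbar S m) = {?c}"
    unfolding Sbar_def with_consts_def fst_conv maps_of_def consts_on_def Sd
    using mss S1 by (auto simp: rmult_def intro!: ext)
  have Bcl: "snd (Sbar S m) ?c ?c = ?c" using Sbar_closed[OF sg] B1 by auto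
  let ?A = "fst (with_consts X act S)"
  show ?thesis unfolding sg_divides_def
  proof (intro exI[of _ ?A] exI[of _ "\<lambda>_. ?c"] conjI)
    show "?A \<subseteq> fst (with_consts X act S)" by simp
    show "?A \<noteq> {}" by (rule wc_ne[OF sg])
    show "\<forall>x\<in>?A. \<forall>y\<in>?A. snd (with_consts X act S) x y \<in> ?A" by (rule wc_closed2[OF sg fa])
    show "hom_on ?A (snd (with_consts X act S)) (fst (Sbar S m)) (snd (Sbar S m)) (\<lambda>_. ?c)"
      unfolding hom_on_def using B1 Bcl by simp
    show "(\<lambda>_. ?c) ` ?A = fst (Sbar S m)" using B1 wc_ne[OF sg, of X act] by auto
  qed
qed

lemma part1:
  fixes S :: "'a set" and X :: "'x set" and U :: "'u set"
  assumes sg: "semigroup_on S m" and fin: "finite X" and fa: "faithful_action X act S m"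
    and td: "ts_divides (X, maps_of X act S) (Sdot S m, maps_of (Sdot S m) (rmult m) S)"
  shows "pv_mem (U, mu) (with_consts X act S) \<longleftrightarrow> pv_mem (U, mu) (Sbar S m)"
proof
  assume "pv_mem (U, mu) (with_consts X act S)"
  then show "pv_mem (U, mu) (Sbar S m)" by (rule pv_transfer1[OF dir1[OF sg fa td]])
next
  assume u: "pv_mem (U, mu) (Sbar S m)"
  show "pv_mem (U, mu) (with_consts X act S)"
  proof (cases "X = {}")
    case True
    show ?thesis by (rule pv_transfer1[OF dir2_empty[OF sg fa True] u])
  next
    case False
    obtain k where k: "k \<ge> 1" "sg_divides (Sbar S m) (sg_power k (with_consts X act S))"
      using dir2[OF sg fa fin False] by blast
    show ?thesis by (rule pv_transfer[OF k(2) k(1) wc_ne[OF sg] wc_closed2[OF sg fa] u])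
  qed
qed

theorem corollary2p3:
  shows "(\<forall>(S::'a set) m (X::'x set) act.
            semigroup_on S m \<and> finite X \<and> faithful_action X act S m \<and>
            ts_divides (X, maps_of X act S) (Sdot S m, maps_of (Sdot S m) (rmult m) S)
            \<longrightarrow> (\<forall>(U::'u set) mu. pv_mem (U, mu) (with_consts X act S) \<longleftrightarrow> pv_mem (U, mu) (Sbar S m)))
       \<and> (\<forall>(S::'b set) m J.
            semigroup_on S m \<and> right_ideal S m J \<and> faithful_action J m S m
            \<longrightarrow> (\<forall>(U::'v set) mu. pv_mem (U, mu) (Sbar S m) \<longleftrightarrow> pv_mem (U, mu) (with_consts J m S)))"
proof (intro conjI allI impI)
  fix S :: "'a set" and m and X :: "'x set" and act and U :: "'u set" and mu
  assume h: "semigroup_on S m \<and> finite X \<and> faithful_action X act S m \<and>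
            ts_divides (X, maps_of X act S) (Sdot S m, maps_of (Sdot S m) (rmult m) S)"
  have h1: "semigroup_on S m" and h2: "finite X" and h3: "faithful_action X act S m"
    and h4: "ts_divides (X, maps_of X act S) (Sdot S m, maps_of (Sdot S m) (rmult m) S)"
    using h by blast+
  show "pv_mem (U, mu) (with_consts X act S) \<longleftrightarrow> pv_mem (U, mu) (Sbar S m)"
    by (rule part1[OF h1 h2 h3 h4])
next
  fix S :: "'b set" and m and J and U :: "'v set" and mu
  assume a: "semigroup_on S m \<and> right_ideal S m J \<and> faithful_action J m S m"
  then have sg: "semigroup_on S m" and ri: "right_ideal S m J" and fa: "faithful_action J m S m" by auto
  have JS: "J \<subseteq> S" and Jcl: "\<forall>j\<in>J. \<forall>s\<in>S. m j s \<in> J" using ri unfolding right_ideal_def by auto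
  have finS: "finite S" using sg unfolding semigroup_on_def by blast
  have fin: "finite J" by (rule finite_subset[OF JS finS])
  have td: "ts_divides (J, maps_of J m S) (Sdot S m, maps_of (Sdot S m) (rmult m) S)"
    unfolding ts_divides_def fst_conv snd_conv
  proof (intro exI[of _ "Some ` J"] exI[of _ the] conjI ballI)
    show "Some ` J \<subseteq> Sdot S m" using JS Some_Sdot[of _ S m] by blast
    show "the ` Some ` J = J" by (simp add: image_image)
    fix a assume "a \<in> maps_of J m S"
    then obtain s where s: "s \<in> S" "a = (\<lambda>x\<in>J. m x s)" unfolding maps_of_def by blast
    show "\<exists>t\<in>maps_of (Sdot S m) (rmult m) S. \<forall>y\<in>Some ` J. t y \<in> Some ` J \<and> a (the y) = the (t y)"
    proof (intro bexI[of _ "\<lambda>y\<in>Sdot S m. rmult m y s"] ballI conjI)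
      show "(\<lambda>y\<in>Sdot S m. rmult m y s) \<in> maps_of (Sdot S m) (rmult m) S"
        unfolding maps_of_def using s by blast
      fix y assume "y \<in> Some ` J"
      then obtain j where j: "j \<in> J" "y = Some j" by blast
      have yS: "y \<in> Sdot S m" using j JS Some_Sdot[of j S m] by blast
      show "(\<lambda>y\<in>Sdot S m. rmult m y s) y \<in> Some ` J" using yS j Jcl s by (simp add: rmult_def)
      show "a (the y) = the ((\<lambda>y\<in>Sdot S m. rmult m y s) y)" using yS j s by (simp add: rmult_def)
    qed
  qed
  show "pv_mem (U, mu) (Sbar S m) \<longleftrightarrow> pv_mem (U, mu) (with_consts J m S)"
    using part1[OF sg fin fa td, of U mu] by (rule sym)
qed

end
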